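(* Let $A$ be a Frobenius algebra of dimension $n$ over a field $\mathbb{k}$ with bilinear form $B$ and Nakayama automorphism $\nu$. Let $\{e_1,\dots,e_n\}$ be a basis of $A$ and $\{e_1^\#,\dots,e_n^\#\}$ the dual basis with $B(e_i^\#,e_j)=\delta_{ij}$, and let $\Delta\in\mathcal{E}_A$ be the Frobenius coproduct $\Delta(x)=\sum_{i=1}^n xe_i\otimes e_i^\#$. Let $M=A\star\Delta=\{a\star\Delta: a\in A\}\subseteq\mathcal{E}_A$ be the left $A$-submodule generated by $\Delta$. Then $\dim_{\mathbb{k}}M=n$.
   Context: A Frobenius algebra over a field $\mathbb{k}$ is a finite-dimensional associative unital $\mathbb{k}$-algebra $A$ with a nondegenerate bilinear form $B:A\times A\to\mathbb{k}$ with $B(ab,c)=B(a,bc)$. Its Nakayama automorphism is the algebra automorphism $\nu:A\to A$ with $B(x,y)=B(y,\nu(x))$ for all $x,y\in A$. The Frobenius space $\mathcal{E}_A$ is the $\mathbb{k}$-vector space of all $\mathbb{k}$-linear maps $\Delta:A\to A\otimes_{\mathbb{k}} A$ that are $A$-bimodule homomorphisms, where $A\otimes A$ has bimodule structure $a(x\otimes y)b=ax\otimes yb$; such a $\Delta$ is determined by $\Delta(1_A)$ via $\Delta(x)=(x\otimes 1)\Delta(1_A)$. The left $A$-module structure $\star$ on $\mathcal{E}_A$ is defined by $(a\star\Delta)(1_A)=(1\otimes\nu^{-1}(a))\Delta(1_A)$, i.e. if $\Delta(1_A)=\sum_j x_j\otimes y_j$ then $a\star\Delta$ is the element of $\mathcal{E}_A$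 with $(a\star\Delta)(1_A)=\sum_j x_j\otimes\nu^{-1}(a)y_j$. *)

theory Defs
  imports Complex_Main "HOL-Library.Function_Algebras"
begin

text \<open>
  The Frobenius algebra A is the whole of a type 'a carrying an
  associative unital ring structure (classes ring + monoid_mult; 0 = 1 is allowed)
  together with a scalar multiplication sc over a field 'k making it a k-algebra.

  Tensors: A (x) A is modelled (faithfully, as A is finite dimensional) by its
  canonical image in the space of bilinear forms on A^* x A^*:  the pure tensor
  x (x) y is the map (f,g) |-> f x * g y on pairs of k-linear functionals
  (and 0 on pairs that are not both linear functionals).
\<close>

type_synonym ('k, 'a) tensor = "('a \<Rightarrow> 'k) \<Rightarrow> ('a \<Rightarrow> 'k) \<Rightarrow> 'k"

definition lin_fun :: "('k::field \<Rightarrow> 'a::ab_group_add \<Rightarrow> 'a) \<Rightarrow> ('a \<Rightarrow> 'k) \<Rightarrow> bool" where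
  "lin_fun sc f \<longleftrightarrow> Vector_Spaces.linear sc ((*) :: 'k \<Rightarrow> 'k \<Rightarrow> 'k) f"

definition tens :: "('k::field \<Rightarrow> 'a::ab_group_add \<Rightarrow> 'a) \<Rightarrow> 'a \<Rightarrow> 'a \<Rightarrow> ('k, 'a) tensor" where
  "tens sc x y = (\<lambda>f g. if lin_fun sc f \<and> lin_fun sc g then f x * g y else 0)"

text \<open>(a (x) 1) t : left multiplication in the first tensor factor\<close>
definition lmult1 :: "('k::field \<Rightarrow> 'a::{ring,monoid_mult} \<Rightarrow> 'a) \<Rightarrow> 'a \<Rightarrow> ('k, 'a) tensor \<Rightarrow> ('k, 'a) tensor" where
  "lmult1 sc a t = (\<lambda>f g. if lin_fun sc f \<and> lin_fun sc g then t (\<lambda>z. f (a * z)) g else 0)"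

text \<open>(1 (x) c) t : left multiplication in the second tensor factor\<close>
definition lmult2 :: "('k::field \<Rightarrow> 'a::{ring,monoid_mult} \<Rightarrow> 'a) \<Rightarrow> 'a \<Rightarrow> ('k, 'a) tensor \<Rightarrow> ('k, 'a) tensor" where
  "lmult2 sc c t = (\<lambda>f g. if lin_fun sc f \<and> lin_fun sc g then t f (\<lambda>z. g (c * z)) else 0)"

text \<open>t (1 (x) b) : right multiplication in the second tensor factor\<close>
definition rmult2 :: "('k::field \<Rightarrow> 'a::{ring,monoid_mult} \<Rightarrow> 'a) \<Rightarrow> 'a \<Rightarrow> ('k, 'a) tensor \<Rightarrow> ('k, 'a) tensor" where
  "rmult2 sc b t = (\<lambda>f g. if lin_fun sc f \<and> lin_fun sc g then t f (\<lambda>z. g (z * b)) else 0)"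

definition tensor_space :: "('k::field \<Rightarrow> 'a::ab_group_add \<Rightarrow> 'a) \<Rightarrow> ('k, 'a) tensor set" where
  "tensor_space sc = module.span (\<lambda>c t f g. c * t f g) (range (\<lambda>(x, y). tens sc x y))"

definition fscale :: "'k::field \<Rightarrow> ('a \<Rightarrow> ('k, 'a) tensor) \<Rightarrow> ('a \<Rightarrow> ('k, 'a) tensor)" where
  "fscale c D = (\<lambda>x f g. c * D x f g)"

definition frobenius_space :: "('k::field \<Rightarrow> 'a::{ring,monoid_mult} \<Rightarrow> 'a) \<Rightarrow> ('a \<Rightarrow> ('k, 'a) tensor) set" where
  "frobenius_space sc = {D. range D \<subseteq> tensor_space sc
      \<and> Vector_Spaces.linear sc (\<lambda>c t f g. c * t f g) D
      \<and> (\<forall>a x b. D (a * x * b) = lmult1 sc a (rmult2 sc b (D x)))}"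

text \<open>The left A-module structure: (a \<star> D)(1) = (1 (x) nu^-1(a)) D(1),
  and (a \<star> D)(x) = (x (x) 1)(a \<star> D)(1).\<close>
definition star :: "('k::field \<Rightarrow> 'a::{ring,monoid_mult} \<Rightarrow> 'a) \<Rightarrow> ('a \<Rightarrow> 'a) \<Rightarrow> 'a
    \<Rightarrow> ('a \<Rightarrow> ('k, 'a) tensor) \<Rightarrow> ('a \<Rightarrow> ('k, 'a) tensor)" where
  "star sc \<nu> a D = (\<lambda>x. lmult1 sc x (lmult2 sc (inv \<nu> a) (D 1)))"

definition frob_coproduct :: "('k::field \<Rightarrow> 'a::{ring,monoid_mult} \<Rightarrow> 'a) \<Rightarrow> nat \<Rightarrow> (nat \<Rightarrow> 'a)
    \<Rightarrow> (nat \<Rightarrow> 'a) \<Rightarrow> ('a \<Rightarrow> ('k, 'a) tensor)" where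
  "frob_coproduct sc n e e' = (\<lambda>x. \<Sum>i<n. tens sc (x * e i) (e' i))"

end

theory Submission
  imports Defs
begin

lemma vs_k: "vector_space ((*) :: 'k::field \<Rightarrow> 'k \<Rightarrow> 'k)"
  by unfold_locales (auto simp: algebra_simps)

lemma vs_fscale: "vector_space (fscale :: 'k::field \<Rightarrow> ('a \<Rightarrow> ('k, 'a) tensor) \<Rightarrow> _)"
  by unfold_locales (auto simp: fscale_def algebra_simps fun_eq_iff)

lemma lin_add: "lin_fun sc f \<Longrightarrow> f (x + y) = f x + f y"
  unfolding lin_fun_def Vector_Spaces.linear_iff by auto

lemma lin_sc: "lin_fun sc f \<Longrightarrow> f (sc c x) = c * f x"
  unfolding lin_fun_def Vector_Spaces.linear_iff by auto

lemma lin_sum: "lin_fun sc f \<Longrightarrow> f (sum h A) = (\<Sum>i\<in>A. f (h i))"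
  unfolding lin_fun_def
  by (rule module_hom.sum[OF module_hom_iff_linear[THEN iffD2]])

lemma lin_fun_mult:
  assumes vs: "vector_space sc" and alg2: "\<And>c x y. sc c (x * y) = x * sc c y"
    and f: "lin_fun sc f"
  shows "lin_fun sc (\<lambda>z. f ((a::'a::{ring,monoid_mult}) * z))"
proof -
  have "\<forall>x y. f (x + y) = f x + f y" "\<forall>c x. f (sc c x) = c * f x"
    using f by (auto simp: lin_fun_def Vector_Spaces.linear_iff)
  then show ?thesis
    using vs vs_k by (auto simp: lin_fun_def Vector_Spaces.linear_iff distrib_left alg2[symmetric])
qed

lemma sum_fun_app: "(sum t A) x = sum (\<lambda>i. t i x) A"
  by (induction A rule: infinite_finite_induct) auto

theorem proposition7:
  fixes sc :: "'k::field \<Rightarrow> 'a::{ring,monoid_mult} \<Rightarrow> 'a"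
    and B :: "'a \<Rightarrow> 'a \<Rightarrow> 'k"
    and \<nu> :: "'a \<Rightarrow> 'a"
    and n :: nat
    and e e' :: "nat \<Rightarrow> 'a"
  assumes vs: "vector_space sc"
    and alg: "\<And>c x y. sc c (x * y) = sc c x * y" "\<And>c x y. sc c (x * y) = x * sc c y"
    and basis_indep: "module.independent sc (e ` {..<n})"
    and basis_span: "module.span sc (e ` {..<n}) = UNIV"
    and basis_inj: "inj_on e {..<n}"
    and B_lin1: "\<And>y. Vector_Spaces.linear sc ((*) :: 'k \<Rightarrow> 'k \<Rightarrow> 'k) (\<lambda>x. B x y)"
    and B_lin2: "\<And>x. Vector_Spaces.linear sc ((*) :: 'k \<Rightarrow> 'k \<Rightarrow> 'k) (\<lambda>y. B x y)"
    and B_nondeg1: "\<And>x. (\<forall>y. B x y = 0) \<Longrightarrow> x = 0"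
    and B_nondeg2: "\<And>y. (\<forall>x. B x y = 0) \<Longrightarrow> y = 0"
    and B_assoc: "\<And>a b c. B (a * b) c = B a (b * c)"
    and nu_lin: "Vector_Spaces.linear sc sc \<nu>"
    and nu_mult: "\<And>x y. \<nu> (x * y) = \<nu> x * \<nu> y"
    and nu_one: "\<nu> 1 = 1"
    and nu_bij: "bij \<nu>"
    and nakayama: "\<And>x y. B x y = B y (\<nu> x)"
    and dual: "\<And>i j. i < n \<Longrightarrow> j < n \<Longrightarrow> B (e' i) (e j) = (if i = j then 1 else 0)"
  shows "vector_space.dim fscale
           ((\<lambda>a. star sc \<nu> a (frob_coproduct sc n e e')) ` UNIV) = n"
proof -
  define \<Delta> where "\<Delta> = frob_coproduct sc n e e'"
  define L where "L c = (\<lambda>x f g. if lin_fun sc f \<and> lin_fun sc g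
      then (\<Sum>i<n. f (x * e i) * g (c * e' i)) else (0::'k))" for c
  have Lfm: "lin_fun sc (\<lambda>z. f (a * z))" if "lin_fun sc f" for f a
    using lin_fun_mult[OF vs alg(2) that] .
  have star_eq: "star sc \<nu> a \<Delta> = L (inv \<nu> a)" for a
    unfolding star_def lmult1_def lmult2_def \<Delta>_def frob_coproduct_def tens_def L_def
    by (auto simp: fun_eq_iff sum_fun_app Lfm mult.assoc)
  have rng: "(\<lambda>a. star sc \<nu> a \<Delta>) ` UNIV = range L"
  proof -
    have "range (inv \<nu>) = UNIV"
      using bij_is_surj[OF bij_imp_bij_inv[OF nu_bij]] by simp
    then show ?thesis unfolding star_eq image_image[symmetric, of L "inv \<nu>"] by simp
  qed
  have Lhom: "module_hom sc fscale L"
    unfolding module_hom_iff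
  proof (intro conjI allI)
    show "module sc" using vs by (simp add: module_iff_vector_space)
    show "module (fscale :: 'k \<Rightarrow> ('a \<Rightarrow> ('k, 'a) tensor) \<Rightarrow> _)"
      using vs_fscale by (simp add: module_iff_vector_space)
    show "L (x + y) = L x + L y" for x y
      unfolding L_def
      by (auto simp: fun_eq_iff distrib_right lin_add distrib_left sum.distrib)
    show "L (sc c x) = fscale c (L x)" for c x
      unfolding L_def fscale_def
      by (auto simp: fun_eq_iff alg(1)[symmetric] lin_sc sum_distrib_left mult.left_commute)
  qed
  interpret A: vector_space sc by (rule vs)
  interpret F: vector_space "fscale :: 'k \<Rightarrow> ('a \<Rightarrow> ('k, 'a) tensor) \<Rightarrow> _"
    by (rule vs_fscale)
  interpret LH: module_hom sc fscale L by (rule Lhom)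
  have Blin2: "lin_fun sc (\<lambda>y. B x y)" for x using B_lin2 by (simp add: lin_fun_def)
  define E where "E = e ` {..<n}"
  have finE: "finite E" unfolding E_def by simp
  have expand: "v = (\<Sum>j<n. sc (B (e' j) v) (e j))" for v
  proof -
    have "v \<in> A.span E" using basis_span E_def by simp
    then obtain u where u: "v = (\<Sum>x\<in>E. sc (u x) x)"
      using A.span_finite[OF finE] by auto
    then have u2: "v = (\<Sum>j<n. sc (u (e j)) (e j))"
      unfolding E_def using sum.reindex[OF basis_inj, of "\<lambda>x. sc (u x) x"] by simp
    have "B (e' i) v = u (e i)" if "i < n" for i
    proof -
      have "B (e' i) v = (\<Sum>j<n. u (e j) * B (e' i) (e j))"
        by (subst u2) (simp add: lin_sum[OF Blin2] lin_sc[OF Blin2])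
      also have "\<dots> = (\<Sum>j<n. if j = i then u (e j) else 0)"
        using dual that by (intro sum.cong) auto
      also have "\<dots> = u (e i)" using that by simp
      finally show ?thesis .
    qed
    then show ?thesis using u2 by simp
  qed
  have injL: "inj L"
    unfolding LH.inj_iff_eq_0
  proof (intro allI impI)
    fix c assume "L c = 0"
    then have z: "L c 1 (\<lambda>z. B 1 z) (\<lambda>z. B w z) = 0" for w by simp
    have "B w c = 0" for w
    proof -
      have "0 = (\<Sum>i<n. B 1 (e i) * B w (c * e' i))"
        using z[of w] Blin2 unfolding L_def by simp
      also have "\<dots> = (\<Sum>i<n. B (e' i) (\<nu> (w * c)) * B 1 (e i))"
        by (intro sum.cong refl) (simp add: B_assoc[symmetric] nakayama[of "w * c"] mult.commute mult.assoc)
      also have "\<dots> = B 1 (\<nu> (w * c))"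
        by (subst (2) expand) (simp add: lin_sum[OF Blin2] lin_sc[OF Blin2])
      also have "\<dots> = B w c"
        by (simp add: nakayama[symmetric] B_assoc)
      finally show ?thesis by simp
    qed
    then show "c = 0" using B_nondeg2 by blast
  qed
  have "range L = F.span (L ` E)"
    using LH.span_image basis_span E_def by simp
  then have "F.dim (range L) = F.dim (L ` E)" by simp
  also have "\<dots> = card (L ` E)"
    using LH.independent_inj_image[OF _ injL] basis_indep E_def
    by (simp add: F.dim_eq_card_independent)
  also have "\<dots> = n"
    unfolding E_def using card_image[OF injL[THEN inj_on_subset]] card_image[OF basis_inj]
    by simp
  finally show ?thesis using rng \<Delta>_def by simp
qed

end
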